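(* Let $D$ be a Dyck path of length $2n$ and let $D_1\sqsubset D_2\sqsubset\cdots\sqsubset D_n=D$ be an $n$-chain of Dyck shapes ending at $D$; set $D_0$ to be the empty path. Fill $S(D)$ by putting one dot in the leftmost cell (the cell with smallest first coordinate) of each ribbon $S(D_i)\setminus S(D_{i-1})$, $1\le i\le n$. Then the result is a Laguerre history of shape $D$, and this construction is a bijection between $n$-chains of Dyck shapes ending at $D$ and Laguerre histories of shape $D$.
   Context: A Dyck path of length $2m$ is a lattice path from $(0,0)$ to $(2m,0)$ with steps $\nearrow=(1,1)$, $\searrow=(1,-1)$ never going below the $x$-axis; $P(x)$ denotes its height at abscissa $x$. A cell is a point $(a,b)\in\mathbb{Z}^2$ with $b\ge0$, $a+b$ even (the tilted square with vertices $(a,b),(a+1,b\pm1),(a+2,b)$). The Dyck shape of $P$ (length $2m$) is $S(P)=\{(a,b): b\ge0,\ a+b\text{ even},\ 0\le a\le 2m-2,\ b+1\le P(a+1)\}$. Cells are adjacent if they differ by $(\pm1,\pm1)$. A ribbon is a nonempty set of cells, connected for adjacency, containing no four cells $(a,b),(a+1,b+1),(a+1,b-1),(a+2,b)$. For Dyck paths $D$ of length $2m$ and $E$ of length $2m+2$, $D\sqsubset E$ means $S(D)\subseteq S(E)$ and $S(E)\setminus S(D)$ is a ribbon. An $n$-chain of Dyck shapes is a sequence $D_1\sqsubset\cdots\sqsubset D_n$ of Dyck paths with $D_i$ of length $2i$; it ends at $D_n$. The column $a$ of $S(D)$ is the set of its cells with first coordinate $a$; it is below a step $\nearrow$ if the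 $(a+1)$-st step of $D$ is $\nearrow$. A Laguerre history of shape $D$ (length $2n$) is a filling of $S(D)$ with $n$ dots (at most one per cell) such that each column below a step $\nearrow$ contains exactly one dot and the other columns contain none. *)

theory Defs
  imports Main
begin

text \<open>A path is a list of steps: True = up step (1,1), False = down step (1,-1).\<close>
type_synonym path = "bool list"
type_synonym cell = "int \<times> int"

definition height :: "path \<Rightarrow> nat \<Rightarrow> int" where
  "height P x = (\<Sum>s\<leftarrow>take x P. if s then 1 else -1)"

definition dyck_path :: "nat \<Rightarrow> path \<Rightarrow> bool" where
  "dyck_path m P \<longleftrightarrow> length P = 2 * m \<and> (\<forall>x \<le> 2 * m. 0 \<le> height P x) \<and> height P (2 * m) = 0"

definition shape :: "path \<Rightarrow> cell set" where
  "shape P = {(a, b). 0 \<le> b \<and> even (a + b) \<and> 0 \<le> a \<and> a \<le> int (length P) - 2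
                 \<and> b + 1 \<le> height P (nat (a + 1))}"

definition adjacent :: "cell \<Rightarrow> cell \<Rightarrow> bool" where
  "adjacent c d \<longleftrightarrow> \<bar>fst c - fst d\<bar> = 1 \<and> \<bar>snd c - snd d\<bar> = 1"

definition connected_cells :: "cell set \<Rightarrow> bool" where
  "connected_cells R \<longleftrightarrow>
     (\<forall>c\<in>R. \<forall>d\<in>R. (\<lambda>x y. x \<in> R \<and> y \<in> R \<and> adjacent x y)\<^sup>*\<^sup>* c d)"

definition ribbon :: "cell set \<Rightarrow> bool" where
  "ribbon R \<longleftrightarrow> R \<noteq> {} \<and> connected_cells R \<and>
     \<not> (\<exists>a b. (a, b) \<in> R \<and> (a + 1, b + 1) \<in> R \<and> (a + 1, b - 1) \<in> R \<and> (a + 2, b) \<in> R)"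

definition covered :: "path \<Rightarrow> path \<Rightarrow> bool" where
  "covered D E \<longleftrightarrow> length E = length D + 2 \<and> shape D \<subseteq> shape E \<and> ribbon (shape E - shape D)"

text \<open>A chain D_1 \<sqsubset> ... \<sqsubset> D_n is the list [D_1, ..., D_n];
  chain_path Ds i is D_i, with D_0 the empty path.\<close>
definition chain_path :: "path list \<Rightarrow> nat \<Rightarrow> path" where
  "chain_path Ds i = (if i = 0 then [] else Ds ! (i - 1))"

definition chains_ending :: "nat \<Rightarrow> path \<Rightarrow> path list set" where
  "chains_ending n D = {Ds. length Ds = n
      \<and> (\<forall>i\<in>{1..n}. dyck_path i (chain_path Ds i))
      \<and> (\<forall>i\<in>{1..<n}. covered (chain_path Ds i) (chain_path Ds (Suc i)))
      \<and> chain_path Ds n = D}"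

text \<open>Column a of S(D) is below an up step iff the (a+1)-st step of D is up.\<close>
definition laguerre_history :: "nat \<Rightarrow> path \<Rightarrow> cell set \<Rightarrow> bool" where
  "laguerre_history n D F \<longleftrightarrow> F \<subseteq> shape D \<and> card F = n \<and>
     (\<forall>a. card {b. (a, b) \<in> F} =
            (if 0 \<le> a \<and> a < int (length D) \<and> D ! nat a then 1 else 0))"

definition leftmost :: "cell set \<Rightarrow> cell" where
  "leftmost R = (THE c. c \<in> R \<and> (\<forall>c'\<in>R. fst c \<le> fst c'))"

definition ribbon_of :: "path list \<Rightarrow> nat \<Rightarrow> cell set" where
  "ribbon_of Ds i = shape (chain_path Ds i) - shape (chain_path Ds (i - 1))"

definition chain_filling :: "nat \<Rightarrow> path list \<Rightarrow> cell set" where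
  "chain_filling n Ds = (\<lambda>i. leftmost (ribbon_of Ds i)) ` {1..n}"

end

theory Submission
  imports Defs
begin


lemma height_0[simp]: "height P 0 = 0"
  by (simp add: height_def)

lemma height_Suc: "height P (Suc x) = height P x + (if x < length P then (if P!x then 1 else -1) else 0)"
proof (cases "x < length P")
  case True
  then show ?thesis by (simp add: height_def take_Suc_conv_app_nth)
next
  case False
  then show ?thesis by (simp add: height_def)
qed

lemma height_le: "height P x \<le> int x"
  by (induction x) (auto simp: height_Suc)

lemma height_parity: "x \<le> length P \<Longrightarrow> even (height P x + int x)"
proof (induction x)
  case (Suc x)
  then show ?case by (auto simp: height_Suc)
qed simp

lemma height_beyond: "length P \<le> x \<Longrightarrow> height P x = height P (length P)"
  by (simp add: height_def)

lemma height_take: "height (take k P) x = height P (min x k)"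
  by (simp add: height_def min_def)

lemma height_upd: "a < length P \<Longrightarrow> P!a \<Longrightarrow>
   height (P[a:=False]) x = height P x - (if a < x then 2 else 0)"
proof (induction x)
  case (Suc x)
  then show ?case by (cases "a = x") (auto simp: height_Suc nth_list_update)
qed simp



lemma dyck_facts:
  assumes "dyck_path (Suc k) D"
  shows "length D = 2*k+2" "\<And>x. 0 \<le> height D x" "height D (2*k+2) = 0"
        "height D (2*k+1) = 1" "\<not> D!(2*k+1)" "D!0"
proof -
  have L: "length D = 2*k+2" using assms by (simp add: dyck_path_def)
  show "length D = 2*k+2" by fact
  have z: "height D (2*k+2) = 0" using assms by (simp add: dyck_path_def)
  show "height D (2*k+2) = 0" by fact
  show nn: "0 \<le> height D x" for x
  proof (cases "x \<le> 2*k+2")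
    case True then show ?thesis using assms by (auto simp: dyck_path_def)
  next
    case False then show ?thesis using height_beyond[of D x] L z by simp
  qed
  have s: "height D (Suc (2*k+1)) = height D (2*k+1) + (if D!(2*k+1) then 1 else -1)"
    using height_Suc[of D "2*k+1"] L by simp
  have "0 \<le> height D (2*k+1)" by (rule nn)
  then show "height D (2*k+1) = 1" "\<not> D!(2*k+1)" using s z by (auto split: if_splits)
  have "height D (Suc 0) = (if D!0 then 1 else -1)" using height_Suc[of D 0] L by simp
  then show "D!0" using nn[of 1] by (auto split: if_splits)
qed

lemma shape_mem: "(int x, b) \<in> shape P \<longleftrightarrow> 0 \<le> b \<and> even (int x + b) \<and> int x + 2 \<le> int (length P)
   \<and> b + 1 \<le> height P (Suc x)"
proof -
  have e: "nat (int x + 1) = Suc x" by simp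
  show ?thesis by (auto simp: shape_def e)
qed

lemma shape_fst: "c \<in> shape P \<Longrightarrow> \<exists>x. fst c = int x"
  by (auto simp: shape_def intro: exI[of _ "nat (fst c)"])

lemma shape_finite: "finite (shape P)"
proof -
  have "shape P \<subseteq> {0..int (length P)} \<times> {0..int (length P) + 1}"
  proof
    fix c assume c: "c \<in> shape P"
    obtain a b where cab: "c = (a,b)" by force
    have "height P (nat (a+1)) \<le> int (nat (a+1))" by (rule height_le)
    then show "c \<in> {0..int (length P)} \<times> {0..int (length P) + 1}"
      using c cab by (auto simp: shape_def)
  qed
  then show ?thesis by (rule finite_subset) auto
qed

definition okk :: "path \<Rightarrow> nat \<Rightarrow> bool" where
  "okk D a \<longleftrightarrow> a + 2 \<le> length D \<and> D!a \<and> (\<forall>x. a < x \<and> x + 2 \<le> length D \<longrightarrow> 2 \<le> height D x)"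

definition flip :: "path \<Rightarrow> nat \<Rightarrow> path" where
  "flip D a = take (length D - 2) (D[a:=False])"

lemma flip_height:
  assumes "okk D a"
  shows "height (flip D a) x = height D (min x (length D - 2)) - (if a < min x (length D - 2) then 2 else 0)"
  using assms by (simp add: flip_def okk_def height_take height_upd)



lemma adjacent_sym: "adjacent c d \<Longrightarrow> adjacent d c"
  by (auto simp: adjacent_def)

lemma bwd:
  assumes dy: "dyck_path (Suc k) D" and ok: "okk D a"
  shows "dyck_path k (flip D a)" "covered (flip D a) D"
        "leftmost (shape D - shape (flip D a)) = (int a, height D a)"
proof -
  let ?h = "height D"
  note df = dyck_facts[OF dy]
  have L: "length D = 2*k+2" by (rule df(1))
  have a2k: "a \<le> 2*k" and Da: "D!a" and ge2: "\<And>x. a < x \<Longrightarrow> x \<le> 2*k \<Longrightarrow> 2 \<le> ?h x"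
    using ok L by (auto simp: okk_def)
  have hsa: "?h (Suc a) = ?h a + 1" using height_Suc[of D a] Da a2k L by simp
  have st: "\<And>x. x < 2*k+2 \<Longrightarrow> ?h (Suc x) = ?h x + 1 \<or> ?h (Suc x) = ?h x - 1"
    using height_Suc L by auto
  have h2k: "?h (2*k) = (if a < 2*k then 2 else 0)"
  proof -
    have "?h (Suc (2*k)) = ?h (2*k) + 1 \<or> ?h (Suc (2*k)) = ?h (2*k) - 1" using st by simp
    moreover have "?h (2*k+1) = 1" by (rule df(4))
    moreover have "0 \<le> ?h (2*k)" by (rule df(2))
    moreover have "a = 2*k \<Longrightarrow> ?h (Suc (2*k)) = ?h (2*k) + 1" using hsa by simp
    ultimately show ?thesis using ge2[of "2*k"] a2k by (cases "a < 2*k") auto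
  qed
  have Lf: "length (flip D a) = 2*k" using L by (simp add: flip_def)
  have hf: "\<And>x. height (flip D a) x = ?h (min x (2*k)) - (if a < min x (2*k) then 2 else 0)"
    using flip_height[OF ok] L by simp
  show dyf: "dyck_path k (flip D a)"
    unfolding dyck_path_def
  proof (intro conjI allI impI)
    show "length (flip D a) = 2*k" by fact
    fix x assume "x \<le> 2*k"
    then show "0 \<le> height (flip D a) x" using hf[of x] ge2[of x] df(2)[of x] by auto
  next
    show "height (flip D a) (2*k) = 0" using hf[of "2*k"] h2k by auto
  qed
  define t where "t x = (int x, ?h (Suc x) - 1)" for x
  let ?R = "shape D - shape (flip D a)"
  have memR: "(int x, b) \<in> ?R \<longleftrightarrow> a \<le> x \<and> x \<le> 2*k \<and> b = ?h (Suc x) - 1" for x b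
  proof
    assume m: "(int x, b) \<in> ?R"
    then have s1: "0 \<le> b" "even (int x + b)" "x \<le> 2*k" "b + 1 \<le> ?h (Suc x)"
      and s2: "\<not> (int x + 2 \<le> int (2*k) \<and> b + 1 \<le> height (flip D a) (Suc x))"
      using L Lf by (auto simp: shape_mem)
    have par: "even (?h (Suc x) + int (Suc x))" using height_parity[of "Suc x" D] s1 L by simp
    have ax: "a \<le> x"
    proof (rule ccontr)
      assume "\<not> a \<le> x"
      then have xa: "x < a" by simp
      then have "height (flip D a) (Suc x) = ?h (Suc x)" using hf[of "Suc x"] a2k by auto
      with s2 s1 have "x + 2 > 2*k" by auto
      with xa a2k have "x = 2*k - 1" "a = 2*k" by auto
      then show False using h2k s1 df(2)[of "2*k"] \<open>x < a\<close> by (cases k) auto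
    qed
    have "?h (Suc x) - 2 \<le> b"
    proof (cases "x + 2 \<le> 2*k")
      case True
      then have "height (flip D a) (Suc x) = ?h (Suc x) - 2" using hf[of "Suc x"] ax by auto
      then show ?thesis using s2 True by auto
    next
      case False
      then have "x = 2*k \<or> x = 2*k - 1" using s1 by auto
      then show ?thesis
      proof
        assume "x = 2*k" then show ?thesis using df(4) s1 by auto
      next
        assume x1: "x = 2*k - 1"
        show ?thesis
        proof (cases k)
          case 0 then show ?thesis using x1 s1 df(4) by auto
        next
          case (Suc j)
          then have "Suc x = 2*k" using x1 by simp
          moreover have "a < 2*k" using ax x1 Suc by simp
          ultimately show ?thesis using h2k s1 by simp
        qed
      qed
    qed
    with par s1 have "b = ?h (Suc x) - 1" by presburger
    then show "a \<le> x \<and> x \<le> 2*k \<and> b = ?h (Suc x) - 1" using ax s1 by simp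
  next
    assume r: "a \<le> x \<and> x \<le> 2*k \<and> b = ?h (Suc x) - 1"
    have par: "even (?h (Suc x) + int (Suc x))" using height_parity[of "Suc x" D] r L by simp
    have pos: "1 \<le> ?h (Suc x)"
    proof (cases "Suc x \<le> 2*k")
      case True then show ?thesis using ge2[of "Suc x"] r by auto
    next
      case False then have "Suc x = 2*k+1" using r by simp
      then show ?thesis using df(4) by simp
    qed
    have notf: "\<not> (int x + 2 \<le> int (2*k) \<and> b + 1 \<le> height (flip D a) (Suc x))"
    proof
      assume c: "int x + 2 \<le> int (2*k) \<and> b + 1 \<le> height (flip D a) (Suc x)"
      then have "height (flip D a) (Suc x) = ?h (Suc x) - 2" using hf[of "Suc x"] r by auto
      then show False using c r by simp
    qed
    show "(int x, b) \<in> ?R" using r pos par notf L Lf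
      by (auto simp: shape_mem)
  qed
  have Rfst: "c \<in> ?R \<Longrightarrow> \<exists>x. a \<le> x \<and> x \<le> 2*k \<and> c = t x" for c
  proof -
    assume c: "c \<in> ?R"
    then obtain x where "fst c = int x" using shape_fst by blast
    then have "c = (int x, snd c)" by (metis prod.collapse)
    with c memR[of x "snd c"] show ?thesis unfolding t_def by auto
  qed
  have tR: "a \<le> x \<Longrightarrow> x \<le> 2*k \<Longrightarrow> t x \<in> ?R" for x
    unfolding t_def using memR by simp
  define rel where "rel = (\<lambda>x y. x \<in> ?R \<and> y \<in> ?R \<and> adjacent x y)"
  have adj: "a \<le> x \<Longrightarrow> x < 2*k \<Longrightarrow> rel (t x) (t (Suc x))" for x
  proof -
    assume "a \<le> x" "x < 2*k"
    moreover have "?h (Suc (Suc x)) = ?h (Suc x) + 1 \<or> ?h (Suc (Suc x)) = ?h (Suc x) - 1"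
      using st[of "Suc x"] \<open>x < 2*k\<close> by simp
    ultimately show ?thesis unfolding rel_def using tR[of x] tR[of "Suc x"]
      by (auto simp: t_def adjacent_def)
  qed
  have chain: "a + j \<le> 2*k \<Longrightarrow> rel\<^sup>*\<^sup>* (t a) (t (a+j)) \<and> rel\<^sup>*\<^sup>* (t (a+j)) (t a)" for j
  proof (induction j)
    case 0 then show ?case by simp
  next
    case (Suc j)
    then have r: "rel (t (a+j)) (t (Suc (a+j)))" using adj[of "a+j"] by simp
    then have r': "rel (t (Suc (a+j))) (t (a+j))" unfolding rel_def using adjacent_sym by blast
    from Suc have IH: "rel\<^sup>*\<^sup>* (t a) (t (a+j)) \<and> rel\<^sup>*\<^sup>* (t (a+j)) (t a)" by simp
    show ?case using IH r r'
      by (auto intro: rtranclp.rtrancl_into_rtrancl converse_rtranclp_into_rtranclp)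
  qed
  have rib: "ribbon ?R"
    unfolding ribbon_def
  proof (intro conjI)
    show "?R \<noteq> {}" using tR[of a] a2k by auto
    show "connected_cells ?R"
      unfolding connected_cells_def
    proof (intro ballI)
      fix c d assume "c \<in> ?R" "d \<in> ?R"
      then obtain x y where "a \<le> x" "x \<le> 2*k" "c = t x" "a \<le> y" "y \<le> 2*k" "d = t y"
        using Rfst by meson
      then have "rel\<^sup>*\<^sup>* c (t a)" "rel\<^sup>*\<^sup>* (t a) d"
        using chain[of "x - a"] chain[of "y - a"] by auto
      then show "(\<lambda>x y. x \<in> ?R \<and> y \<in> ?R \<and> adjacent x y)\<^sup>*\<^sup>* c d"
        unfolding rel_def by (rule rtranclp_trans)
    qed
    show "\<not> (\<exists>a0 b0. (a0, b0) \<in> ?R \<and> (a0 + 1, b0 + 1) \<in> ?R \<and> (a0 + 1, b0 - 1) \<in> ?R \<and> (a0 + 2, b0) \<in> ?R)"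
    proof
      assume "\<exists>a0 b0. (a0, b0) \<in> ?R \<and> (a0 + 1, b0 + 1) \<in> ?R \<and> (a0 + 1, b0 - 1) \<in> ?R \<and> (a0 + 2, b0) \<in> ?R"
      then obtain a0 b0 where m1: "(a0 + 1, b0 + 1) \<in> ?R" and m2: "(a0 + 1, b0 - 1) \<in> ?R" by blast
      obtain x where "a0 + 1 = int x" using shape_fst[of "(a0+1, b0+1)"] m1 by auto
      with m1 m2 memR[of x "b0+1"] memR[of x "b0 - 1"] show False by auto
    qed
  qed
  show "covered (flip D a) D"
    unfolding covered_def
  proof (intro conjI rib)
    show "length D = length (flip D a) + 2" using L Lf by simp
    show "shape (flip D a) \<subseteq> shape D"
    proof
      fix c assume c: "c \<in> shape (flip D a)"
      then obtain x where "fst c = int x" using shape_fst by blast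
      then have cc: "c = (int x, snd c)" by (metis prod.collapse)
      have "int x + 2 \<le> int (2*k)" using c cc Lf by (metis shape_mem)
      then have "height (flip D a) (Suc x) \<le> ?h (Suc x)" using hf[of "Suc x"]
        by (auto simp: min_def)
      moreover have "(int x, snd c) \<in> shape (flip D a)" using c cc by simp
      ultimately have "(int x, snd c) \<in> shape D" using L Lf unfolding shape_mem by auto
      then show "c \<in> shape D" using cc by simp
    qed
  qed
  show "leftmost ?R = (int a, ?h a)"
  proof -
    have P: "t a \<in> ?R \<and> (\<forall>c'\<in>?R. fst (t a) \<le> fst c')"
      using tR[of a] a2k Rfst by (force simp: t_def)
    have "leftmost ?R = t a"
      unfolding leftmost_def
    proof (rule the1_equality)
      show "t a \<in> ?R \<and> (\<forall>c'\<in>?R. fst (t a) \<le> fst c')" by (rule P)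
      show "\<exists>!c. c \<in> ?R \<and> (\<forall>c'\<in>?R. fst c \<le> fst c')"
      proof (rule ex1I[of _ "t a"])
        show "t a \<in> ?R \<and> (\<forall>c'\<in>?R. fst (t a) \<le> fst c')" by (rule P)
        fix c assume c: "c \<in> ?R \<and> (\<forall>c'\<in>?R. fst c \<le> fst c')"
        then obtain x where "a \<le> x" "c = t x" using Rfst by blast
        moreover have "fst c \<le> fst (t a)" using c P by blast
        ultimately show "c = t a" by (simp add: t_def)
      qed
    qed
    then show ?thesis using hsa by (simp add: t_def)
  qed
qed



lemma habs: "\<bar>height P (Suc x) - height P x\<bar> \<le> 1"
  by (auto simp: height_Suc)

lemma hstep: "x < length P \<Longrightarrow> height P (Suc x) = height P x + (if P!x then 1 else -1)"
  by (simp add: height_Suc)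

lemma fwd:
  assumes dy: "dyck_path (Suc k) D" and dy': "dyck_path k D'" and cov: "covered D' D"
  shows "\<exists>a. okk D a \<and> D' = flip D a"
proof -
  let ?h = "height D" and ?g = "height D'"
  note df = dyck_facts[OF dy]
  have L: "length D = 2*k+2" by (rule df(1))
  have L': "length D' = 2*k" using dy' by (simp add: dyck_path_def)
  have gnn: "0 \<le> ?g x" for x
  proof (cases "x \<le> 2*k")
    case True then show ?thesis using dy' by (auto simp: dyck_path_def)
  next
    case False then show ?thesis using height_beyond[of D' x] L' dy' by (simp add: dyck_path_def)
  qed
  have gz: "2*k \<le> x \<Longrightarrow> ?g x = 0" for x
    using height_beyond[of D' x] L' dy' by (simp add: dyck_path_def)
  have sub: "shape D' \<subseteq> shape D" and rib: "ribbon (shape D - shape D')"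
    using cov by (auto simp: covered_def)
  have gh: "?g x \<le> ?h x" for x
  proof (cases "2*k \<le> x")
    case True then show ?thesis using gz df(2) by simp
  next
    case False
    show ?thesis
    proof (cases x)
      case 0 then show ?thesis by simp
    next
      case (Suc y)
      show ?thesis
      proof (cases "1 \<le> ?g x")
        case True
        have par: "even (?g (Suc y) + int (Suc y))" using height_parity[of "Suc y" D'] False Suc L' by simp
        have "(int y, ?g (Suc y) - 1) \<in> shape D'"
          unfolding shape_mem using True Suc False L' par by auto
        then have "(int y, ?g (Suc y) - 1) \<in> shape D" using sub by blast
        then show ?thesis unfolding shape_mem using Suc by simp
      next
        case False then show ?thesis using df(2)[of x] by simp
      qed
    qed
  qed
  let ?R = "shape D - shape D'"
  have memR: "(int x, b) \<in> ?R \<longleftrightarrow> 0 \<le> b \<and> even (int x + b) \<and> x \<le> 2*k \<and> b + 1 \<le> ?h (Suc x) \<and> ?g (Suc x) \<le> b" for x b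
  proof -
    have "x + 2 > 2*k \<Longrightarrow> ?g (Suc x) = 0" using gz by simp
    then show ?thesis unfolding Diff_iff shape_mem L L' by auto
  qed
  have parh: "x \<le> 2*k+2 \<Longrightarrow> even (?h x + int x)" for x using height_parity[of x D] L by simp
  have parg: "x \<le> 2*k \<Longrightarrow> even (?g x + int x)" for x using height_parity[of x D'] L' by simp
  have evd: "x \<le> 2*k \<Longrightarrow> even (?h x - ?g x)" for x
  proof -
    assume "x \<le> 2*k"
    then have "even (?h x + int x)" "even (?g x + int x)" using parh parg by auto
    then have "even ((?h x + int x) - (?g x + int x))" by simp
    then show ?thesis by simp
  qed
  define col where "col x \<longleftrightarrow> (\<exists>b. (int x, b) \<in> ?R)" for x
  have colI: "x \<le> 2*k \<Longrightarrow> ?g (Suc x) < ?h (Suc x) \<Longrightarrow> col x" for x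
  proof -
    assume x: "x \<le> 2*k" "?g (Suc x) < ?h (Suc x)"
    have "even (?h (Suc x) + int (Suc x))" using parh x by simp
    then have "(int x, ?h (Suc x) - 1) \<in> ?R" unfolding memR using x gnn[of "Suc x"] by auto
    then show "col x" unfolding col_def by blast
  qed
  have colD: "col x \<Longrightarrow> ?g (Suc x) < ?h (Suc x) \<and> x \<le> 2*k" for x
    unfolding col_def memR by auto
  have col2k: "col (2*k)" using colI[of "2*k"] gz[of "Suc (2*k)"] df(4) by simp
  define a where "a = (LEAST x. col x)"
  have cola: "col a" unfolding a_def by (rule LeastI[of col, OF col2k])
  have a2k: "a \<le> 2*k" using colD[OF cola] by simp
  have belowa: "y < a \<Longrightarrow> \<not> col y" for y unfolding a_def by (rule not_less_Least)
  have reach: "(\<lambda>x y. x \<in> ?R \<and> y \<in> ?R \<and> adjacent x y)\<^sup>*\<^sup>* c d \<Longrightarrow> fst c < int y \<Longrightarrow> \<not> col y \<Longrightarrow> fst d < int y" for c d y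
  proof (induction rule: rtranclp_induct)
    case base then show ?case by simp
  next
    case (step e f)
    then have f: "f \<in> ?R" "\<bar>fst e - fst f\<bar> = 1" "fst e < int y" by (auto simp: adjacent_def)
    have "fst f \<noteq> int y"
    proof
      assume "fst f = int y"
      then have "(int y, snd f) \<in> ?R" using f by (metis prod.collapse)
      then show False using step.prems unfolding col_def by blast
    qed
    then show ?case using f by auto
  qed
  have interval: "a \<le> y \<Longrightarrow> y \<le> 2*k \<Longrightarrow> col y" for y
  proof (rule ccontr)
    assume y: "a \<le> y" "y \<le> 2*k" "\<not> col y"
    then have "y \<noteq> a" "y \<noteq> 2*k" using cola col2k by auto
    obtain ba where ba: "(int a, ba) \<in> ?R" using cola unfolding col_def by blast
    obtain b2 where b2: "(int (2*k), b2) \<in> ?R" using col2k unfolding col_def by blast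
    have rr: "(\<lambda>x y. x \<in> ?R \<and> y \<in> ?R \<and> adjacent x y)\<^sup>*\<^sup>* (int a, ba) (int (2*k), b2)"
      using rib ba b2 unfolding ribbon_def connected_cells_def by blast
    have "fst (int (2*k), b2) < int y" using reach[OF rr _ y(3)] y \<open>y \<noteq> a\<close> by simp
    then show False using y by simp
  qed
  have eqa: "x \<le> a \<Longrightarrow> ?h x = ?g x" for x
  proof (cases x)
    case (Suc y)
    assume "x \<le> a"
    then have "\<not> col y" using belowa Suc by simp
    moreover have "y \<le> 2*k" using a2k Suc \<open>x \<le> a\<close> by simp
    ultimately show ?thesis using colI[of y] gh[of x] Suc by force
  qed simp
  have gt: "a < x \<Longrightarrow> x \<le> 2*k \<Longrightarrow> ?g x + 2 \<le> ?h x" for x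
  proof -
    assume x: "a < x" "x \<le> 2*k"
    then obtain y where y: "x = Suc y" "a \<le> y" by (cases x) auto
    then have "?g x < ?h x" using colD[OF interval[of y]] x by simp
    moreover have "even (?h x - ?g x)" using evd x by simp
    ultimately show ?thesis by presburger
  qed
  have sq: "\<not> (\<exists>a0 b0. (a0, b0) \<in> ?R \<and> (a0 + 1, b0 + 1) \<in> ?R \<and> (a0 + 1, b0 - 1) \<in> ?R \<and> (a0 + 2, b0) \<in> ?R)"
    using rib unfolding ribbon_def by blast
  have eq2: "a < x \<Longrightarrow> x \<le> 2*k \<Longrightarrow> ?h x = ?g x + 2" for x
  proof (rule ccontr)
    assume x: "a < x" "x \<le> 2*k" "?h x \<noteq> ?g x + 2"
    then have ex: "\<exists>z. a < z \<and> z \<le> 2*k \<and> ?g z + 4 \<le> ?h z"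
    proof -
      have "even (?h x - ?g x)" using evd x by simp
      then have "?g x + 4 \<le> ?h x" using gt[of x] x by presburger
      then show ?thesis using x by blast
    qed
    define z where "z = (LEAST z. a < z \<and> z \<le> 2*k \<and> ?g z + 4 \<le> ?h z)"
    have zP: "a < z \<and> z \<le> 2*k \<and> ?g z + 4 \<le> ?h z"
      using ex unfolding z_def by (metis (mono_tags, lifting) LeastI)
    have zmin: "w < z \<Longrightarrow> \<not> (a < w \<and> w \<le> 2*k \<and> ?g w + 4 \<le> ?h w)" for w
      unfolding z_def by (rule not_less_Least)
    obtain w where w: "z = Suc w" using zP by (cases z) auto
    have s1: "\<bar>?h z - ?h w\<bar> \<le> 1" "\<bar>?g z - ?g w\<bar> \<le> 1" using habs w by auto
    have wa: "a < w"
    proof (rule ccontr)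
      assume "\<not> a < w"
      then have "w = a" using zP w by simp
      then have "?h w = ?g w" using eqa by simp
      then show False using s1 zP by linarith
    qed
    have dw: "?h w = ?g w + 2"
    proof -
      have w2: "w \<le> 2*k" using w zP by simp
      have "?g w + 2 \<le> ?h w" using gt[of w] wa w2 by simp
      moreover have "\<not> ?g w + 4 \<le> ?h w" using zmin[of w] w wa w2 by simp
      moreover have "even (?h w - ?g w)" using evd w2 by simp
      ultimately show ?thesis by presburger
    qed
    have hz: "?h z = ?h w + 1" "?g z = ?g w - 1" using dw s1 zP by linarith+
    obtain v where v: "w = Suc v" using wa by (cases w) auto
    have hw2: "2 \<le> ?h w" using dw gnn[of w] by simp
    have s2: "\<bar>?h (Suc z) - ?h z\<bar> \<le> 1" "\<bar>?g (Suc z) - ?g z\<bar> \<le> 1" using habs by auto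
    have pw: "even (?h w + int w)" using parh[of w] zP w by simp
    have c1: "(int v, ?h w - 1) \<in> ?R" unfolding memR using v hw2 pw dw zP w by auto
    have c2: "(int v + 1, ?h w - 1 + 1) \<in> ?R"
    proof -
      have "(int w, ?h w) \<in> ?R" unfolding memR using hw2 pw dw zP w hz by auto
      moreover have "int w = int v + 1" using v by simp
      ultimately show ?thesis by simp
    qed
    have c3: "(int v + 1, ?h w - 1 - 1) \<in> ?R"
    proof -
      have "(int w, ?h w - 2) \<in> ?R" unfolding memR using hw2 pw dw zP w hz by auto
      moreover have "int w = int v + 1" "?h w - 1 - 1 = ?h w - 2" using v by simp_all
      ultimately show ?thesis by simp
    qed
    have c4: "(int v + 2, ?h w - 1) \<in> ?R"
    proof -
      have "even (int z + (?h w - 1))" using pw w by simp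
      then have "(int z, ?h w - 1) \<in> ?R" unfolding memR using hw2 dw zP w hz s2 by auto
      moreover have "int z = int v + 2" using v w by simp
      ultimately show ?thesis by simp
    qed
    show False using sq c1 c2 c3 c4 by blast
  qed
  have Da: "D!a"
  proof -
    have "?h (Suc a) = ?h a + (if D!a then 1 else -1)" using hstep[of a D] L a2k by simp
    moreover have "?g (Suc a) + 1 \<le> ?h (Suc a)"
    proof (cases "Suc a \<le> 2*k")
      case True then show ?thesis using eq2[of "Suc a"] by simp
    next
      case False then have "Suc a = 2*k+1" using a2k by simp
      then show ?thesis using gz[of "Suc a"] df(4) by simp
    qed
    moreover have "?h a = ?g a" using eqa by simp
    moreover have "\<bar>?g (Suc a) - ?g a\<bar> \<le> 1" by (rule habs)
    ultimately show ?thesis by (auto split: if_splits)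
  qed
  have ok: "okk D a" unfolding okk_def using a2k Da L eq2 gnn by force
  have "D' = flip D a"
  proof (rule nth_equalityI)
    show "length D' = length (flip D a)" using L L' by (simp add: flip_def)
    fix i assume "i < length D'"
    then have i: "i < 2*k" using L' by simp
    have gi: "?g (Suc i) = ?g i + (if D'!i then 1 else -1)" using hstep[of i D'] i L' by simp
    have hi: "?h (Suc i) = ?h i + (if D!i then 1 else -1)" using hstep[of i D] i L by simp
    have fi: "flip D a ! i = (if i = a then False else D!i)" using i L by (simp add: flip_def nth_list_update)
    show "D'!i = flip D a ! i"
    proof (cases "i < a")
      case True then show ?thesis using eqa[of i] eqa[of "Suc i"] gi hi fi by (auto split: if_splits)
    next
      case False
      show ?thesis
      proof (cases "i = a")
        case True then show ?thesis using eqa[of i] eq2[of "Suc i"] i gi hi fi Da by (auto split: if_splits)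
      next
        case False
        then show ?thesis using \<open>\<not> i < a\<close> eq2[of i] eq2[of "Suc i"] i gi hi fi by (auto split: if_splits)
      qed
    qed
  qed
  then show ?thesis using ok by blast
qed



lemma lag_finite: "laguerre_history m D F \<Longrightarrow> finite F"
  using shape_finite finite_subset by (auto simp: laguerre_history_def)

lemma lag_col_finite: "finite F \<Longrightarrow> finite {b. (x, b) \<in> F}"
proof -
  assume "finite F"
  moreover have "{b. (x, b) \<in> F} \<subseteq> snd ` F" by force
  ultimately show ?thesis using finite_subset by blast
qed

lemma lag_mem:
  assumes "laguerre_history m D F" "(x, b) \<in> F"
  shows "\<exists>n. x = int n \<and> n < length D \<and> D!n"
proof -
  have "card {b. (x, b) \<in> F} \<noteq> 0"
    using assms lag_col_finite[OF lag_finite[OF assms(1)], of x] by auto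
  then have "0 \<le> x \<and> x < int (length D) \<and> D ! nat x"
    using assms(1) unfolding laguerre_history_def by (metis (no_types, lifting))
  then show ?thesis by (intro exI[of _ "nat x"]) auto
qed

lemma lag_uniq:
  assumes "laguerre_history m D F" "(x, b) \<in> F" "(x, b') \<in> F"
  shows "b = b'"
proof -
  obtain n where n: "x = int n" "n < length D" "D!n" using lag_mem[OF assms(1,2)] by blast
  then have "card {b. (x, b) \<in> F} = 1" using assms(1) unfolding laguerre_history_def by auto
  then obtain c where c: "{b. (x, b) \<in> F} = {c}" by (rule card_1_singletonE)
  have "b \<in> {b. (x, b) \<in> F}" "b' \<in> {b. (x, b) \<in> F}" using assms by auto
  then show ?thesis using c by auto
qed

lemma lag_ex:
  assumes "laguerre_history m D F" "n < length D" "D!n"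
  shows "\<exists>b. (int n, b) \<in> F"
proof -
  have "card {b. (int n, b) \<in> F} = 1" using assms unfolding laguerre_history_def by auto
  then obtain c where "{b. (int n, b) \<in> F} = {c}" by (rule card_1_singletonE)
  then show ?thesis by blast
qed

lemma flip_nth: "okk D a \<Longrightarrow> i < length D - 2 \<Longrightarrow> flip D a ! i = (if i = a then False else D!i)"
  by (simp add: flip_def okk_def nth_list_update)

lemma upeq:
  assumes dy: "dyck_path (Suc k) D" and ok: "okk D a" and na: "n \<noteq> a"
  shows "(n < 2*k \<and> flip D a ! n) = (n < 2*k+2 \<and> D!n)"
proof -
  note df = dyck_facts[OF dy]
  have "n = 2*k \<Longrightarrow> \<not> D!n"
  proof
    assume n: "n = 2*k" and Dn: "D!n"
    then have "a < 2*k" using ok na df(1) by (auto simp: okk_def)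
    then have "2 \<le> height D (2*k)" using ok df(1) by (auto simp: okk_def)
    then show False using hstep[of "2*k" D] df(1) df(4) n Dn by simp
  qed
  moreover have "n = 2*k+1 \<Longrightarrow> \<not> D!n" using df(5) by simp
  moreover have "n < 2*k \<Longrightarrow> flip D a ! n = D!n" using flip_nth[OF ok, of n] df(1) na by simp
  ultimately show ?thesis by (cases "n < 2*k"; cases "n = 2*k"; cases "n = 2*k+1") auto
qed

lemma notin_flip:
  assumes ok: "okk D a" and ax: "a < x" and that: "0 \<le> b"
  shows "(int x, height D x + b) \<notin> shape (flip D a)"
proof
  assume m: "(int x, height D x + b) \<in> shape (flip D a)"
  have Lf: "length (flip D a) = length D - 2" using ok by (simp add: flip_def okk_def)
  then have x2: "x + 2 \<le> length D - 2" using m by (simp add: shape_mem)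
  have "height (flip D a) (Suc x) = height D (Suc x) - 2"
    using flip_height[OF ok, of "Suc x"] x2 ax by auto
  moreover have "height D (Suc x) \<le> height D x + 1" using habs[of D x] by simp
  ultimately show False using m that by (simp add: shape_mem)
qed

lemma K1:
  assumes dy: "dyck_path (Suc k) D" and ok: "okk D a" and F': "laguerre_history k (flip D a) F'"
  shows "laguerre_history (Suc k) D (insert (int a, height D a) F')"
        "(int a, height D a) \<notin> F'"
proof -
  note df = dyck_facts[OF dy]
  have cov: "covered (flip D a) D" using bwd[OF dy ok] by simp
  have a2k: "a \<le> 2*k" and Da: "D!a" using ok df(1) by (auto simp: okk_def)
  have Lf: "length (flip D a) = 2*k" using df(1) by (simp add: flip_def)
  have fin: "finite F'" by (rule lag_finite[OF F'])
  show nin: "(int a, height D a) \<notin> F'"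
  proof
    assume "(int a, height D a) \<in> F'"
    from lag_mem[OF F' this] obtain n where "int a = int n" "n < length (flip D a)" "flip D a ! n" by blast
    then show False using flip_nth[OF ok, of a] Lf df(1) by simp
  qed
  have cS: "(int a, height D a) \<in> shape D"
  proof -
    have "height D (Suc a) = height D a + 1" using hstep[of a D] a2k df(1) Da by simp
    moreover have "even (height D a + int a)" using height_parity[of a D] a2k df(1) by simp
    ultimately show ?thesis unfolding shape_mem using df(2)[of a] a2k df(1) by (simp add: add.commute)
  qed
  show "laguerre_history (Suc k) D (insert (int a, height D a) F')"
    unfolding laguerre_history_def
  proof (intro conjI allI)
    show "insert (int a, height D a) F' \<subseteq> shape D"
      using cS F' cov by (auto simp: laguerre_history_def covered_def)
    show "card (insert (int a, height D a) F') = Suc k"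
      using fin nin F' by (simp add: laguerre_history_def)
    fix x :: int
    show "card {b. (x, b) \<in> insert (int a, height D a) F'} =
          (if 0 \<le> x \<and> x < int (length D) \<and> D ! nat x then 1 else 0)"
    proof (cases "x = int a")
      case True
      have "{b. (x, b) \<in> F'} = {}"
      proof -
        { fix b assume "(x, b) \<in> F'"
          from lag_mem[OF F' this] obtain n where "x = int n" "n < length (flip D a)" "flip D a ! n" by blast
          then have False using True flip_nth[OF ok, of a] Lf df(1) by simp }
        then show ?thesis by blast
      qed
      then have "{b. (x, b) \<in> insert (int a, height D a) F'} = {height D a}" using True by auto
      then show ?thesis using True a2k df(1) Da by simp
    next
      case False
      then have e: "{b. (x, b) \<in> insert (int a, height D a) F'} = {b. (x, b) \<in> F'}" by auto
      have c: "card {b. (x, b) \<in> F'} = (if 0 \<le> x \<and> x < int (2*k) \<and> flip D a ! nat x then 1 else 0)"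
        using F' Lf unfolding laguerre_history_def by simp
      show ?thesis
      proof (cases "0 \<le> x")
        case True
        have "nat x \<noteq> a" using False True by auto
        from upeq[OF dy ok this] have "(nat x < 2*k \<and> flip D a ! nat x) = (nat x < 2*k+2 \<and> D ! nat x)" .
        then show ?thesis using e c True df(1) by (auto simp del: of_nat_mult simp add: nat_less_iff)
      next
        case False then show ?thesis using e c by simp
      qed
    qed
  qed
qed



lemma K2:
  assumes dy: "dyck_path (Suc k) D" and ok1: "okk D a1" and ok2: "okk D a2"
    and F1: "laguerre_history k (flip D a1) F1" and F2: "laguerre_history k (flip D a2) F2"
    and eq: "insert (int a1, height D a1) F1 = insert (int a2, height D a2) F2"
  shows "a1 = a2 \<and> F1 = F2"
proof -
  have sub1: "F1 \<subseteq> shape (flip D a1)" and sub2: "F2 \<subseteq> shape (flip D a2)"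
    using F1 F2 by (auto simp: laguerre_history_def)
  have "\<not> a1 < a2"
  proof
    assume lt: "a1 < a2"
    then have "(int a2, height D a2) \<in> F1" using eq by (metis insertE insertI1 of_nat_eq_iff prod.inject less_irrefl)
    then have "(int a2, height D a2 + 0) \<in> shape (flip D a1)" using sub1 by auto
    then show False using notin_flip[OF ok1 lt, of 0] by simp
  qed
  moreover have "\<not> a2 < a1"
  proof
    assume lt: "a2 < a1"
    then have "(int a1, height D a1) \<in> F2" using eq by (metis insertE insertI1 of_nat_eq_iff prod.inject less_irrefl)
    then have "(int a1, height D a1 + 0) \<in> shape (flip D a2)" using sub2 by auto
    then show False using notin_flip[OF ok2 lt, of 0] by simp
  qed
  ultimately have a: "a1 = a2" by simp
  have "(int a1, height D a1) \<notin> F1" "(int a2, height D a2) \<notin> F2"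
    using K1(2)[OF dy ok1 F1] K1(2)[OF dy ok2 F2] by auto
  then have "F1 = F2" using eq a by (simp add: insert_ident)
  then show ?thesis using a by simp
qed

lemma K3:
  assumes dy: "dyck_path (Suc k) D" and F: "laguerre_history (Suc k) D F"
  shows "\<exists>a F'. okk D a \<and> laguerre_history k (flip D a) F' \<and> F = insert (int a, height D a) F'"
proof -
  note df = dyck_facts[OF dy]
  let ?h = "height D"
  have L: "length D = 2*k+2" by (rule df(1))
  have FS: "F \<subseteq> shape D" using F by (simp add: laguerre_history_def)
  have par: "x \<le> 2*k+2 \<Longrightarrow> even (?h x + int x)" for x using height_parity[of x D] L by simp
  define A where "A = {x. x < 2*k+2 \<and> D!x \<and> (int x, ?h x) \<in> F}"
  have top: "y < 2*k+2 \<Longrightarrow> D!y \<Longrightarrow> ?h y \<le> 1 \<Longrightarrow> y \<in> A" for y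
  proof -
    assume y: "y < 2*k+2" "D!y" "?h y \<le> 1"
    obtain b where b: "(int y, b) \<in> F" using lag_ex[OF F, of y] y L by auto
    then have "(int y, b) \<in> shape D" using FS by blast
    then have bb: "0 \<le> b" "even (int y + b)" "b + 1 \<le> ?h (Suc y)" by (auto simp: shape_mem)
    have "?h (Suc y) = ?h y + 1" using hstep[of y D] y L by simp
    moreover have "even (?h y + int y)" using par y by simp
    ultimately have "b = ?h y" using bb y(3) df(2)[of y] by presburger
    then show "y \<in> A" using b y unfolding A_def by simp
  qed
  have finA: "finite A" unfolding A_def by simp
  have A0: "0 \<in> A" using top[of 0] df(6) by simp
  define a where "a = Max A"
  have aA: "a \<in> A" unfolding a_def using finA A0 Max_in by blast
  have amax: "x \<in> A \<Longrightarrow> x \<le> a" for x unfolding a_def using finA by simp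
  have Da: "D!a" and cF: "(int a, ?h a) \<in> F" using aA unfolding A_def by auto
  have a2: "a + 2 \<le> 2*k+2" using FS cF L by (auto simp: shape_mem)
  have ge2: "a < x \<Longrightarrow> x \<le> 2*k \<Longrightarrow> 2 \<le> ?h x" for x
  proof (rule ccontr)
    assume x: "a < x" "x \<le> 2*k" "\<not> 2 \<le> ?h x"
    define S where "S = {x. a < x \<and> x \<le> 2*k \<and> ?h x \<le> 1}"
    have finS: "finite S" unfolding S_def by simp
    have "x \<in> S" using x unfolding S_def by simp
    define y where "y = Max S"
    have yS: "y \<in> S" unfolding y_def using finS \<open>x \<in> S\<close> Max_in by blast
    have ymax: "z \<in> S \<Longrightarrow> z \<le> y" for z unfolding y_def using finS by simp
    have y: "a < y" "y \<le> 2*k" "?h y \<le> 1" using yS unfolding S_def by auto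
    show False
    proof (cases "y = 2*k")
      case True
      have "even (?h y)" using par[of y] True by simp
      then have "?h y = 0" using y df(2)[of y] by presburger
      then have "D!y" using hstep[of y D] True L df(4) by (auto split: if_splits)
      then have "y \<in> A" using top y L \<open>?h y = 0\<close> by simp
      then show False using amax y by fastforce
    next
      case False
      then have "Suc y \<notin> S" using ymax by fastforce
      then have "2 \<le> ?h (Suc y)" using y False unfolding S_def by auto
      then have "D!y" using hstep[of y D] y L by (auto split: if_splits)
      then have "y \<in> A" using top y L by simp
      then show False using amax y by fastforce
    qed
  qed
  have ok: "okk D a" unfolding okk_def using a2 Da ge2 L by auto
  define F' where "F' = F - {(int a, ?h a)}"
  have Feq: "F = insert (int a, ?h a) F'" unfolding F'_def using cF by auto
  have Lf: "length (flip D a) = 2*k" using L by (simp add: flip_def)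
  have hf: "\<And>x. height (flip D a) x = ?h (min x (2*k)) - (if a < min x (2*k) then 2 else 0)"
    using flip_height[OF ok] L by simp
  have fin: "finite F" by (rule lag_finite[OF F])
  have sub: "F' \<subseteq> shape (flip D a)"
  proof
    fix c assume c: "c \<in> F'"
    obtain x0 b where cxb: "c = (x0, b)" by force
    then have cF': "(x0, b) \<in> F" "(x0, b) \<noteq> (int a, ?h a)" using c unfolding F'_def by auto
    obtain x where x: "x0 = int x" "x < length D" "D!x" using lag_mem[OF F cF'(1)] by blast
    have cS: "(int x, b) \<in> shape D" using FS cF' x by auto
    then have bb: "0 \<le> b" "even (int x + b)" "b + 1 \<le> ?h (Suc x)" by (auto simp: shape_mem)
    have hs: "?h (Suc x) = ?h x + 1" using hstep[of x D] x by simp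
    have xne: "x \<noteq> a"
    proof
      assume "x = a"
      then have "b = ?h a" using lag_uniq[OF F cF'(1)] cF x by simp
      then show False using cF' x \<open>x = a\<close> by simp
    qed
    have x2k1: "x \<noteq> 2*k+1" using df(5) x by auto
    show "c \<in> shape (flip D a)"
    proof (cases "x < a")
      case True
      have "x + 2 \<le> 2*k"
      proof (rule ccontr)
        assume "\<not> x + 2 \<le> 2*k"
        then have "x = 2*k - 1" "a = 2*k" "k \<ge> 1" using True a2 by auto
        then have "?h (Suc (Suc x)) = ?h x + 2"
          using hstep[of x D] hstep[of "Suc x" D] x Da L by simp
        moreover have "Suc (Suc x) = 2*k+1" using \<open>x = 2*k - 1\<close> \<open>k \<ge> 1\<close> by simp
        ultimately show False using df(4) df(2)[of x] by simp
      qed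
      moreover have "height (flip D a) (Suc x) = ?h (Suc x)" using hf[of "Suc x"] True calculation by auto
      ultimately show ?thesis using bb cxb x Lf by (simp add: shape_mem)
    next
      case False
      then have ax: "a < x" using xne by simp
      have "x \<notin> A" using amax ax by fastforce
      then have bne: "b \<noteq> ?h x" using cF' x L unfolding A_def by auto
      have x2: "x + 2 \<le> 2*k"
      proof (rule ccontr)
        assume "\<not> x + 2 \<le> 2*k"
        then have "x = 2*k \<or> x = 2*k - 1" using x L x2k1 by auto
        then show False
        proof
          assume "x = 2*k"
          then show False using ge2[of x] ax hs df(4) by simp
        next
          assume x1: "x = 2*k - 1"
          then have k1: "k \<ge> 1" using ax by auto
          then have "2 \<le> ?h x" using ge2[of x] ax x1 by simp
          moreover have "?h (Suc (Suc x)) \<ge> ?h (Suc x) - 1" using habs[of D "Suc x"] by simp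
          moreover have "Suc (Suc x) = 2*k+1" using x1 k1 by simp
          ultimately show False using hs df(4) by simp
        qed
      qed
      have "even (?h x + int x)" using par x L by simp
      then have "b + 2 \<le> ?h x" using bb bne hs by presburger
      moreover have "height (flip D a) (Suc x) = ?h (Suc x) - 2" using hf[of "Suc x"] ax x2 by auto
      ultimately show ?thesis using bb cxb x Lf x2 hs by (simp add: shape_mem)
    qed
  qed
  have "laguerre_history k (flip D a) F'"
    unfolding laguerre_history_def
  proof (intro conjI allI sub)
    show "card F' = k" using F fin cF unfolding F'_def laguerre_history_def by simp
    fix x :: int
    show "card {b. (x, b) \<in> F'} = (if 0 \<le> x \<and> x < int (length (flip D a)) \<and> flip D a ! nat x then 1 else 0)"
    proof (cases "x = int a")
      case True
      have "{b. (x, b) \<in> F'} = {}"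
        using lag_uniq[OF F] cF True unfolding F'_def by auto
      moreover have "\<not> (nat x < 2*k \<and> flip D a ! nat x)" using True flip_nth[OF ok, of a] L by simp
      ultimately show ?thesis using Lf by simp
    next
      case False
      then have e: "{b. (x, b) \<in> F'} = {b. (x, b) \<in> F}" unfolding F'_def by auto
      have c: "card {b. (x, b) \<in> F} = (if 0 \<le> x \<and> x < int (2*k+2) \<and> D ! nat x then 1 else 0)"
        using F L unfolding laguerre_history_def by simp
      show ?thesis
      proof (cases "0 \<le> x")
        case True
        have "nat x \<noteq> a" using False True by auto
        from upeq[OF dy ok this] have "(nat x < 2*k \<and> flip D a ! nat x) = (nat x < 2*k+2 \<and> D ! nat x)" .
        then show ?thesis using e c True Lf by (auto simp del: of_nat_mult simp add: nat_less_iff)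
      next
        case False then show ?thesis using e c by simp
      qed
    qed
  qed
  then show ?thesis using ok Feq by blast
qed



lemma chain_path_app: "i \<le> length Ds \<Longrightarrow> chain_path (Ds @ [D]) i = chain_path Ds i"
  by (auto simp: chain_path_def nth_append)

lemma chain_path_last: "chain_path (Ds @ [D]) (Suc (length Ds)) = D"
  by (simp add: chain_path_def)

lemma filling_app:
  assumes "length Ds = k"
  shows "chain_filling (Suc k) (Ds @ [D]) = insert (leftmost (shape D - shape (chain_path Ds k))) (chain_filling k Ds)"
proof -
  have iv: "{1..Suc k} = insert (Suc k) {1..k}" by auto
  have r1: "ribbon_of (Ds @ [D]) (Suc k) = shape D - shape (chain_path Ds k)"
    using assms chain_path_app[of k Ds D] chain_path_last[of Ds D] by (simp add: ribbon_of_def)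
  have r2: "i \<in> {1..k} \<Longrightarrow> ribbon_of (Ds @ [D]) i = ribbon_of Ds i" for i
  proof -
    assume i: "i \<in> {1..k}"
    then have "i \<le> length Ds" "i - 1 \<le> length Ds" using assms by auto
    then show ?thesis by (simp add: ribbon_of_def chain_path_app)
  qed
  show ?thesis unfolding chain_filling_def iv image_insert r1 using r2 by simp
qed

lemma covered_base: "dyck_path (Suc 0) D \<Longrightarrow> covered [] D"
proof -
  assume dy: "dyck_path (Suc 0) D"
  note df = dyck_facts[OF dy]
  have ok: "okk D 0" using df by (auto simp: okk_def)
  have "flip D 0 = []" using df(1) by (simp add: flip_def)
  then show ?thesis using bwd(2)[OF dy ok] by simp
qed

lemma dyck0: "dyck_path 0 D \<longleftrightarrow> D = []"
  by (auto simp: dyck_path_def height_def)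

lemma cd1:
  assumes dy: "dyck_path (Suc k) D" and Ds: "Ds \<in> chains_ending (Suc k) D"
  shows "\<exists>Ds'. Ds = Ds' @ [D] \<and> Ds' \<in> chains_ending k (chain_path Ds' k)
     \<and> covered (chain_path Ds' k) D \<and> dyck_path k (chain_path Ds' k)"
proof -
  have len: "length Ds = Suc k" using Ds by (simp add: chains_ending_def)
  define Ds' where "Ds' = butlast Ds"
  have ne: "Ds \<noteq> []" using len by auto
  have e: "Ds = Ds' @ [last Ds]" unfolding Ds'_def using ne by simp
  have l': "length Ds' = k" unfolding Ds'_def using len by simp
  have "last Ds = chain_path Ds (Suc k)" using ne len by (simp add: chain_path_def last_conv_nth)
  then have lD: "last Ds = D" using Ds by (simp add: chains_ending_def)
  then have e2: "Ds = Ds' @ [D]" using e by simp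
  have cp: "i \<le> k \<Longrightarrow> chain_path Ds i = chain_path Ds' i" for i
    using chain_path_app[of i Ds' D] l' e2 by simp
  have dyi: "\<forall>i\<in>{1..Suc k}. dyck_path i (chain_path Ds i)"
    and covi: "\<forall>i\<in>{1..<Suc k}. covered (chain_path Ds i) (chain_path Ds (Suc i))"
    using Ds by (auto simp: chains_ending_def)
  have m: "Ds' \<in> chains_ending k (chain_path Ds' k)"
    unfolding chains_ending_def
  proof (intro CollectI conjI ballI refl l')
    fix i assume i: "i \<in> {1..k}"
    then have "dyck_path i (chain_path Ds i)" using dyi by auto
    then show "dyck_path i (chain_path Ds' i)" using cp[of i] i by auto
  next
    fix i assume i: "i \<in> {1..<k}"
    then have "covered (chain_path Ds i) (chain_path Ds (Suc i))" using covi by auto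
    then show "covered (chain_path Ds' i) (chain_path Ds' (Suc i))" using cp[of i] cp[of "Suc i"] i by auto
  qed
  have dk: "dyck_path k (chain_path Ds' k)"
  proof (cases k)
    case 0 then show ?thesis by (simp add: chain_path_def dyck0)
  next
    case (Suc j)
    then have "dyck_path k (chain_path Ds k)" using dyi by auto
    then show ?thesis using cp[of k] by simp
  qed
  have ck: "covered (chain_path Ds' k) D"
  proof (cases k)
    case 0 then show ?thesis using covered_base dy by (simp add: chain_path_def)
  next
    case (Suc j)
    then have "covered (chain_path Ds k) (chain_path Ds (Suc k))" using covi by auto
    moreover have "chain_path Ds (Suc k) = D" using Ds by (simp add: chains_ending_def)
    ultimately show ?thesis using cp[of k] by simp
  qed
  show ?thesis using e2 m dk ck by blast
qed

lemma cd2: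
  assumes dy: "dyck_path (Suc k) D" and Ds': "Ds' \<in> chains_ending k D'" and cov: "covered D' D"
  shows "Ds' @ [D] \<in> chains_ending (Suc k) D"
proof -
  have l': "length Ds' = k" and dyi: "\<forall>i\<in>{1..k}. dyck_path i (chain_path Ds' i)"
    and covi: "\<forall>i\<in>{1..<k}. covered (chain_path Ds' i) (chain_path Ds' (Suc i))"
    and last: "chain_path Ds' k = D'"
    using Ds' by (auto simp: chains_ending_def)
  have cp: "i \<le> k \<Longrightarrow> chain_path (Ds' @ [D]) i = chain_path Ds' i" for i
    using chain_path_app[of i Ds' D] l' by simp
  have cl: "chain_path (Ds' @ [D]) (Suc k) = D" using chain_path_last[of Ds' D] l' by simp
  show ?thesis
    unfolding chains_ending_def
  proof (intro CollectI conjI ballI)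
    show "length (Ds' @ [D]) = Suc k" using l' by simp
    show "chain_path (Ds' @ [D]) (Suc k) = D" by (rule cl)
    fix i assume i: "i \<in> {1..Suc k}"
    show "dyck_path i (chain_path (Ds' @ [D]) i)"
    proof (cases "i = Suc k")
      case True then show ?thesis using cl dy by simp
    next
      case False then show ?thesis using i cp dyi by auto
    qed
  next
    fix i assume i: "i \<in> {1..<Suc k}"
    show "covered (chain_path (Ds' @ [D]) i) (chain_path (Ds' @ [D]) (Suc i))"
    proof (cases "Suc i = Suc k")
      case True then show ?thesis using cl cp[of i] last cov by simp
    next
      case False then show ?thesis using i cp[of i] cp[of "Suc i"] covi by auto
    qed
  qed
qed

lemma main:
  "\<forall>D. dyck_path k D \<longrightarrow>
     (\<forall>Ds\<in>chains_ending k D. laguerre_history k D (chain_filling k Ds))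
   \<and> inj_on (chain_filling k) (chains_ending k D)
   \<and> {F. laguerre_history k D F} \<subseteq> chain_filling k ` chains_ending k D"
proof (induction k)
  case 0
  show ?case
  proof (intro allI impI)
    fix D :: path assume "dyck_path 0 D"
    then have D: "D = []" by (simp add: dyck0)
    have ch: "chains_ending 0 D = {[]}" using D by (auto simp: chains_ending_def chain_path_def)
    have sh: "shape [] = {}" by (auto simp: shape_def)
    have cf: "chain_filling 0 [] = {}" by (simp add: chain_filling_def)
    have lag: "laguerre_history 0 [] F \<longleftrightarrow> F = {}" for F
      using sh by (auto simp: laguerre_history_def)
    show "(\<forall>Ds\<in>chains_ending 0 D. laguerre_history 0 D (chain_filling 0 Ds))
   \<and> inj_on (chain_filling 0) (chains_ending 0 D)
   \<and> {F. laguerre_history 0 D F} \<subseteq> chain_filling 0 ` chains_ending 0 D"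
      using ch cf lag D by auto
  qed
next
  case (Suc k)
  show ?case
  proof (intro allI impI conjI)
    fix D assume dy: "dyck_path (Suc k) D"
    have dec: "Ds \<in> chains_ending (Suc k) D \<Longrightarrow> \<exists>Ds' a. Ds = Ds' @ [D] \<and> okk D a
        \<and> Ds' \<in> chains_ending k (flip D a)
        \<and> laguerre_history k (flip D a) (chain_filling k Ds')
        \<and> chain_filling (Suc k) Ds = insert (int a, height D a) (chain_filling k Ds')" for Ds
    proof -
      assume "Ds \<in> chains_ending (Suc k) D"
      from cd1[OF dy this] obtain Ds' where Ds': "Ds = Ds' @ [D]"
        "Ds' \<in> chains_ending k (chain_path Ds' k)" "covered (chain_path Ds' k) D"
        "dyck_path k (chain_path Ds' k)" by blast
      obtain a where a: "okk D a" "chain_path Ds' k = flip D a" using fwd[OF dy Ds'(4) Ds'(3)] by blast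
      have l': "length Ds' = k" using Ds'(2) by (simp add: chains_ending_def)
      have "laguerre_history k (flip D a) (chain_filling k Ds')"
        using Suc.IH Ds'(2,4) a by auto
      moreover have "chain_filling (Suc k) Ds = insert (int a, height D a) (chain_filling k Ds')"
        using filling_app[OF l', of D] Ds'(1) a bwd(3)[OF dy a(1)] by simp
      ultimately show ?thesis using Ds' a by auto
    qed
    show "\<forall>Ds\<in>chains_ending (Suc k) D. laguerre_history (Suc k) D (chain_filling (Suc k) Ds)"
    proof
      fix Ds assume "Ds \<in> chains_ending (Suc k) D"
      from dec[OF this] obtain Ds' a where "okk D a"
        "laguerre_history k (flip D a) (chain_filling k Ds')"
        "chain_filling (Suc k) Ds = insert (int a, height D a) (chain_filling k Ds')" by blast
      then show "laguerre_history (Suc k) D (chain_filling (Suc k) Ds)" using K1(1)[OF dy] by simp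
    qed
    show "inj_on (chain_filling (Suc k)) (chains_ending (Suc k) D)"
    proof (rule inj_onI)
      fix Ds1 Ds2 assume m1: "Ds1 \<in> chains_ending (Suc k) D" and m2: "Ds2 \<in> chains_ending (Suc k) D"
        and eq: "chain_filling (Suc k) Ds1 = chain_filling (Suc k) Ds2"
      from dec[OF m1] obtain Ds1' a1 where d1: "Ds1 = Ds1' @ [D]" "okk D a1"
        "Ds1' \<in> chains_ending k (flip D a1)" "laguerre_history k (flip D a1) (chain_filling k Ds1')"
        "chain_filling (Suc k) Ds1 = insert (int a1, height D a1) (chain_filling k Ds1')" by blast
      from dec[OF m2] obtain Ds2' a2 where d2: "Ds2 = Ds2' @ [D]" "okk D a2"
        "Ds2' \<in> chains_ending k (flip D a2)" "laguerre_history k (flip D a2) (chain_filling k Ds2')"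
        "chain_filling (Suc k) Ds2 = insert (int a2, height D a2) (chain_filling k Ds2')" by blast
      have "a1 = a2 \<and> chain_filling k Ds1' = chain_filling k Ds2'"
        using K2[OF dy d1(2) d2(2) d1(4) d2(4)] eq d1(5) d2(5) by simp
      moreover have "dyck_path k (flip D a1)" using bwd(1)[OF dy d1(2)] .
      ultimately have "Ds1' = Ds2'" using Suc.IH d1(3) d2(3) by (auto simp: inj_on_def)
      then show "Ds1 = Ds2" using d1(1) d2(1) by simp
    qed
    show "{F. laguerre_history (Suc k) D F} \<subseteq> chain_filling (Suc k) ` chains_ending (Suc k) D"
    proof
      fix F assume "F \<in> {F. laguerre_history (Suc k) D F}"
      then have F: "laguerre_history (Suc k) D F" by simp
      from K3[OF dy F] obtain a F' where aF: "okk D a" "laguerre_history k (flip D a) F'"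
        "F = insert (int a, height D a) F'" by blast
      have dyf: "dyck_path k (flip D a)" and cov: "covered (flip D a) D"
        and lm: "leftmost (shape D - shape (flip D a)) = (int a, height D a)"
        using bwd[OF dy aF(1)] by auto
      obtain Ds' where Ds': "Ds' \<in> chains_ending k (flip D a)" "F' = chain_filling k Ds'"
        using Suc.IH dyf aF(2) by blast
      have l': "length Ds' = k" and cpk: "chain_path Ds' k = flip D a"
        using Ds'(1) by (auto simp: chains_ending_def)
      have "Ds' @ [D] \<in> chains_ending (Suc k) D" by (rule cd2[OF dy Ds'(1) cov])
      moreover have "chain_filling (Suc k) (Ds' @ [D]) = F"
        using filling_app[OF l', of D] cpk lm aF(3) Ds'(2) by simp
      ultimately show "F \<in> chain_filling (Suc k) ` chains_ending (Suc k) D" by blast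
    qed
  qed
qed

theorem mainTheorem8:
  fixes n :: nat and D :: path
  assumes "dyck_path n D"
  shows "(\<forall>Ds\<in>chains_ending n D. laguerre_history n D (chain_filling n Ds))
       \<and> bij_betw (chain_filling n) (chains_ending n D) {F. laguerre_history n D F}"
proof -
  have m: "(\<forall>Ds\<in>chains_ending n D. laguerre_history n D (chain_filling n Ds))
   \<and> inj_on (chain_filling n) (chains_ending n D)
   \<and> {F. laguerre_history n D F} \<subseteq> chain_filling n ` chains_ending n D"
    using main assms by blast
  then have "chain_filling n ` chains_ending n D = {F. laguerre_history n D F}" by blast
  then show ?thesis using m by (simp add: bij_betw_def)
qed

end
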